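(* Consider the system of ODEs $$\frac{dx_j}{dt}=\gamma(\underline{x})\,\nu_0(\underline{x})\,(\hat x_j-x_j),\qquad j=1,\dots,J,$$ in the linear case, i.e. where $\hat x_j=\nu_j/\nu_0$ are constants for $j=1,\dots,J$. For $j_1,j_2\in\{1,\dots,J\}$ define the $(j_1,j_2)$-density $\rho_{j_1,j_2}(t)=x_{j_1}(t)/x_{j_2}(t)$ and the $(j_1,j_2)$-fixed point ratio $\phi_{j_1,j_2}=\nu_{j_1}/\nu_{j_2}$ (constant in this case). Then along any solution, $\rho_{j_1,j_2}(t)$ changes monotonically in $t$.
   Context: Here $\gamma(\underline{x})>0$ is the cumulative clock function and $\nu_j$ is the expected increment of the counting variable $X_j$ per micro-event; $x_j=X_j/X_0$. *)

theory Defs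
  imports "HOL-Analysis.Analysis"
begin

definition density :: "(real \<Rightarrow> nat \<Rightarrow> real) \<Rightarrow> nat \<Rightarrow> nat \<Rightarrow> real \<Rightarrow> real" where
  "density x j1 j2 t = x t j1 / x t j2"

end

theory Submission
  imports Defs
begin

lemma incr_within:
  fixes f f' :: "real \<Rightarrow> real"
  assumes T: "is_interval T"
    and d: "\<And>t. t \<in> T \<Longrightarrow> (f has_real_derivative f' t) (at t within T)"
    and p: "\<And>t. t \<in> T \<Longrightarrow> f' t \<ge> 0"
  shows "mono_on T f"
proof (rule mono_onI)
  fix s t assume st: "s \<in> T" "t \<in> T" "s \<le> t"
  have sub: "{s..t} \<subseteq> T"
  proof
    fix u assume "u \<in> {s..t}"
    then show "u \<in> T" using mem_is_interval_1_I[OF T st(1) st(2)] by simp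
  qed
  have "continuous (at u within T) f" if "u \<in> T" for u
    using DERIV_continuous[OF d[OF that]] .
  then have "continuous_on T f" by (simp add: continuous_on_eq_continuous_within)
  then have c: "continuous_on {s..t} f" using sub continuous_on_subset by blast
  show "f s \<le> f t"
  proof (rule DERIV_nonneg_imp_increasing_open[OF st(3) _ c])
    fix y assume y: "s < y" "y < t"
    then have yT: "y \<in> T" using sub by auto
    have sub2: "{s<..<t} \<subseteq> T" using sub by auto
    have "(f has_real_derivative f' y) (at y within {s<..<t})"
      using DERIV_subset[OF d[OF yT] sub2] .
    moreover have "at y within {s<..<t} = at y"
      using y by (intro at_within_open) auto
    ultimately have "(f has_real_derivative f' y) (at y)" by simp
    then show "\<exists>z. (f has_real_derivative z) (at y) \<and> z \<ge> 0" using p[OF yT] by blast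
  qed
qed

lemma decr_within:
  fixes f f' :: "real \<Rightarrow> real"
  assumes T: "is_interval T"
    and d: "\<And>t. t \<in> T \<Longrightarrow> (f has_real_derivative f' t) (at t within T)"
    and p: "\<And>t. t \<in> T \<Longrightarrow> f' t \<le> 0"
  shows "antimono_on T f"
proof -
  have "mono_on T (\<lambda>t. - f t)"
    by (rule incr_within[OF T, of _ "\<lambda>t. - f' t"]) (auto intro!: derivative_eq_intros d p)
  then show ?thesis unfolding mono_on_def monotone_on_def by auto
qed

theorem lemma4:
  fixes J :: nat
    and T :: "real set"
    and x :: "real \<Rightarrow> nat \<Rightarrow> real"
    and gamma nu0 :: "(nat \<Rightarrow> real) \<Rightarrow> real"
    and xhat :: "nat \<Rightarrow> real"
    and j1 j2 :: nat
  assumes T_interval: "is_interval T"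
    and gamma_pos: "\<And>y. gamma y > 0"
    and nu0_pos: "\<And>y. nu0 y > 0"
    and ode: "\<And>j t. j \<in> {1..J} \<Longrightarrow> t \<in> T \<Longrightarrow>
               ((\<lambda>s. x s j) has_real_derivative
                  gamma (x t) * nu0 (x t) * (xhat j - x t j)) (at t within T)"
    and j1: "j1 \<in> {1..J}" and j2: "j2 \<in> {1..J}"
    and nonzero: "\<And>t. t \<in> T \<Longrightarrow> x t j2 \<noteq> 0"
  shows "mono_on T (density x j1 j2) \<or> antimono_on T (density x j1 j2)"
proof -
  define k where "k t = gamma (x t) * nu0 (x t)" for t
  define w where "w t = xhat j1 * x t j2 - xhat j2 * x t j1" for t
  have kpos: "k t > 0" for t unfolding k_def using gamma_pos nu0_pos by simp
  have da: "((\<lambda>s. x s j1) has_real_derivative k t * (xhat j1 - x t j1)) (at t within T)"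
    if "t \<in> T" for t using ode[OF j1 that] unfolding k_def .
  have db: "((\<lambda>s. x s j2) has_real_derivative k t * (xhat j2 - x t j2)) (at t within T)"
    if "t \<in> T" for t using ode[OF j2 that] unfolding k_def .
  have dw: "(w has_real_derivative - k t * w t) (at t within T)" if "t \<in> T" for t
  proof -
    have "((\<lambda>s. xhat j1 * x s j2 - xhat j2 * x s j1) has_real_derivative
        xhat j1 * (k t * (xhat j2 - x t j2)) - xhat j2 * (k t * (xhat j1 - x t j1))) (at t within T)"
      using DERIV_diff[OF DERIV_cmult[OF db[OF that], of "xhat j1"] DERIV_cmult[OF da[OF that], of "xhat j2"]] .
    moreover have "xhat j1 * (k t * (xhat j2 - x t j2)) - xhat j2 * (k t * (xhat j1 - x t j1)) = - k t * w t"
      unfolding w_def by (simp add: algebra_simps)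
    ultimately show ?thesis unfolding w_def[abs_def] by simp
  qed
  have "continuous (at u within T) w" if "u \<in> T" for u
    using DERIV_continuous[OF dw[OF that]] .
  then have cw: "continuous_on T w" by (simp add: continuous_on_eq_continuous_within)
  have dw2: "((\<lambda>t. (w t)^2) has_real_derivative 2 * w t * (- k t * w t)) (at t within T)"
    if "t \<in> T" for t
    using DERIV_power[OF dw[OF that], of 2] by (simp add: algebra_simps)
  have am: "antimono_on T (\<lambda>t. (w t)^2)"
  proof (rule decr_within[OF T_interval dw2])
    fix t
    have "0 \<le> k t * (w t)^2" using kpos[of t] by simp
    then show "2 * w t * (- k t * w t) \<le> 0" by (simp add: power2_eq_square algebra_simps)
  qed
  have zero_fwd: "w t = 0" if "s \<in> T" "t \<in> T" "s \<le> t" "w s = 0" for s t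
  proof -
    have "(w t)^2 \<le> (w s)^2" using am that unfolding mono_on_def monotone_on_def by auto
    then show ?thesis using that(4) by simp
  qed
  have nochange: False if H: "s \<in> T" "t \<in> T" "w s > 0" "w t < 0" for s t
  proof -
    have "\<exists>r. min s t \<le> r \<and> r \<le> max s t \<and> w r = 0"
    proof (cases "s \<le> t")
      case True
      have "{s..t} \<subseteq> T" using mem_is_interval_1_I[OF T_interval that(1) that(2)] by auto
      then have "continuous_on {s..t} w" using cw continuous_on_subset by blast
      then obtain r where "s \<le> r" "r \<le> t" "w r = 0"
        using IVT2'[of w t 0 s] True H by auto
      then show ?thesis using True by auto
    next
      case False
      have "{t..s} \<subseteq> T" using mem_is_interval_1_I[OF T_interval that(2) that(1)] by auto
      then have "continuous_on {t..s} w" using cw continuous_on_subset by blast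
      then obtain r where "t \<le> r" "r \<le> s" "w r = 0"
        using IVT'[of w t 0 s] False H by auto
      then show ?thesis using False by auto
    qed
    then obtain r where r: "min s t \<le> r" "r \<le> max s t" "w r = 0" by blast
    have mT: "min s t \<in> T" "max s t \<in> T" using that by (auto simp: min_def max_def)
    have rT: "r \<in> T" using mem_is_interval_1_I[OF T_interval mT(1) mT(2) r(1) r(2)] .
    note mT(2)
    then have "w (max s t) = 0" using zero_fwd[OF rT _ r(2) r(3)] by blast
    then show False using that by (simp add: max_def split: if_splits)
  qed
  have dr: "(density x j1 j2 has_real_derivative k t * w t / (x t j2)^2) (at t within T)"
    if "t \<in> T" for t
  proof -
    have "((\<lambda>s. x s j1 / x s j2) has_real_derivative
        (k t * (xhat j1 - x t j1) * x t j2 - x t j1 * (k t * (xhat j2 - x t j2))) / (x t j2 * x t j2))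
        (at t within T)"
      by (rule DERIV_divide[OF da[OF that] db[OF that] nonzero[OF that]])
    moreover have "(k t * (xhat j1 - x t j1) * x t j2 - x t j1 * (k t * (xhat j2 - x t j2))) / (x t j2 * x t j2)
        = k t * w t / (x t j2)^2"
      unfolding w_def by (simp add: algebra_simps power2_eq_square)
    ultimately show ?thesis unfolding density_def[abs_def] by simp
  qed
  show ?thesis
  proof (cases "\<forall>t\<in>T. w t \<ge> 0")
    case True
    have "mono_on T (density x j1 j2)"
    proof (rule incr_within[OF T_interval dr])
      fix t assume t: "t \<in> T"
      have "0 \<le> k t * w t" using True t kpos[of t] by simp
      then show "0 \<le> k t * w t / (x t j2)^2" by simp
    qed
    then show ?thesis by blast
  next
    case False
    then obtain s where s: "s \<in> T" "w s < 0" by force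
    have wn: "w t \<le> 0" if "t \<in> T" for t using nochange[OF that s(1)] s(2) by (meson not_le)
    have "antimono_on T (density x j1 j2)"
    proof (rule decr_within[OF T_interval dr])
      fix t assume t: "t \<in> T"
      have "k t * w t \<le> 0" using wn[OF t] kpos[of t] by (simp add: mult_nonneg_nonpos)
      then show "k t * w t / (x t j2)^2 \<le> 0" by (simp add: divide_nonpos_nonneg)
    qed
    then show ?thesis by blast
  qed
qed

end
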